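(* Let $N\geq3$, $a_c=\frac{N-2}{2}$, $a<a_c$, assume either $b_{FS}(a)\leq b<a+1$ with $a<0$ or $a\leq b<a+1$ with $a\geq0$ and $a+b>0$, and let $\nu\geq2$. For nonnegative $v\in H^1(\mathcal{C})$ with $(\nu-\frac12)\Lambda<\|v\|^2_{H^1(\mathcal{C})}<(\nu+\frac12)\Lambda$, let $f=-\Delta_\theta v-\partial_t^2v+(a_c-a)^2v-v^p$, let $s_1<\dots<s_\nu$ be a point where $\min_{s_j}\|v-\sum_j\Psi_{s_j}\|_{H^1(\mathcal{C})}$ is attained, $Q=e^{-(a_c-a)\min_{i\neq j}|s_i-s_j|}$, $s_0=-\infty$, $s_{\nu+1}=+\infty$, and $E=(\sum_{j=1}^\nu\Psi_{s_j})^p-\sum_{j=1}^\nu\Psi_{s_j}^p$. Then: (i) if $1<p<3$, there exist $\delta>0$ and $C>0$ such that $\|f\|_{H^{-1}(\mathcal{C})}\leq\delta$ implies $$\|E\|_\natural:=\sum_{i=1}^\nu\sup_{t\in(\frac{s_i+s_{i-1}}{2},\frac{s_{i+1}+s_i}{2})}\frac{|E|}{Qe^{-(a_c-a)(p-2)|t-s_i|}}\leq C;$$ (ii) if $p\geq3$, then for every sufficiently small $\varsigma>0$ there exist $\delta>0$ and $C>0$ such that $\|f\|_{H^{-1}(\mathcal{C})}\leq\delta$ implies $$\|E\|_\sharp:=\sum_{i=1}^\nu\sup_{t\in(\frac{s_i+s_{i-1}}{2},\frac{s_{i+1}+s_i}{2})}\frac{|E|}{Qe^{-(1-\varsigma)(a_c-a)|t-s_i|}}\leq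 C.$$
   Context: $b_{FS}(a)=\frac{N(a_c-a)}{2\sqrt{(a_c-a)^2+(N-1)}}+a-a_c$, $p=\frac{N+2(1+a-b)}{N-2(1+a-b)}$. $\mathcal{C}=\mathbb{R}\times\mathbb{S}^{N-1}$ with coordinates $(t,\theta)$; $H^1(\mathcal{C})$ has inner product $\int_{\mathcal{C}}(\nabla w\cdot\nabla v+(a_c-a)^2wv)d\mu$, dual $H^{-1}(\mathcal{C})$; $f$ is the functional $\varphi\mapsto\langle v,\varphi\rangle_{H^1}-\int v^p\varphi$. $C_{a,b,N}^{-1}=\inf_{v\neq0}\|v\|^2_{H^1(\mathcal{C})}/\|v\|^2_{L^{p+1}(\mathcal{C})}$, $\Lambda=(C_{a,b,N}^{-1})^{\frac{p+1}{p-1}}$. $\Psi(t)=\big(\frac{(p+1)(a_c-a)^2}{2}\big)^{\frac{1}{p-1}}\big(\cosh(\frac{(a_c-a)(p-1)}{2}t)\big)^{-\frac{2}{p-1}}$, $\Psi_s(t)=\Psi(t-s)$. *)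

theory Defs
  imports "HOL-Analysis.Analysis"
begin

definition ac :: "nat \<Rightarrow> real" where
  "ac N = (real N - 2) / 2"

definition bFS :: "nat \<Rightarrow> real \<Rightarrow> real" where
  "bFS N a = real N * (ac N - a) / (2 * sqrt ((ac N - a)^2 + (real N - 1))) + a - ac N"

definition pexp :: "nat \<Rightarrow> real \<Rightarrow> real \<Rightarrow> real" where
  "pexp N a b = (real N + 2 * (1 + a - b)) / (real N - 2 * (1 + a - b))"

section \<open>The cylinder R x S^(N-1), N = CARD('n)\<close>

text \<open>Surface measure on the unit sphere of real^'n, via the cone formula
  sigma(A) = N * Lebesgue measure of the cone {r x. 0 < r < 1, x in A}.\<close>
definition sphere_measure :: "(real^'n) measure" where
  "sphere_measure =
     density (distr (restrict_space lborel (ball 0 1 - {0})) borel (\<lambda>x. x /\<^sub>R norm x))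
             (\<lambda>_. ennreal (real CARD('n)))"

definition cyl_measure :: "(real \<times> (real^'n)) measure" where
  "cyl_measure = lborel \<Otimes>\<^sub>M sphere_measure"

text \<open>C^1 functions with compact support in t (restricted to R x sphere they are
  exactly the C^1_c functions on the cylinder).\<close>
definition cyl_test :: "(real \<times> (real^'n) \<Rightarrow> real) \<Rightarrow> bool" where
  "cyl_test \<phi> \<longleftrightarrow>
     (\<exists>D. (\<forall>z. (\<phi> has_derivative blinfun_apply (D z)) (at z)) \<and> continuous_on UNIV D) \<and>
     (\<exists>R. \<forall>t x. R < \<bar>t\<bar> \<longrightarrow> \<phi> (t, x) = 0)"

definition cyl_dt :: "(real \<times> (real^'n) \<Rightarrow> real) \<Rightarrow> real \<times> (real^'n) \<Rightarrow> real" where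
  "cyl_dt \<phi> z = frechet_derivative \<phi> (at z) (1, 0)"

definition cyl_gradx :: "(real \<times> (real^'n) \<Rightarrow> real) \<Rightarrow> real \<times> (real^'n) \<Rightarrow> real^'n" where
  "cyl_gradx \<phi> z = (\<chi> i. frechet_derivative \<phi> (at z) (0, axis i 1))"

definition cyl_grad_theta :: "(real \<times> (real^'n) \<Rightarrow> real) \<Rightarrow> real \<times> (real^'n) \<Rightarrow> real^'n" where
  "cyl_grad_theta \<phi> z = cyl_gradx \<phi> z - (snd z \<bullet> cyl_gradx \<phi> z) *\<^sub>R snd z"

text \<open>H^1(C) inner product with weight m^2 = (a_c - a)^2, on test functions.\<close>
definition cyl_inner :: "real \<Rightarrow> (real \<times> (real^'n) \<Rightarrow> real) \<Rightarrow> (real \<times> (real^'n) \<Rightarrow> real) \<Rightarrow> real" where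
  "cyl_inner m \<phi> \<psi> = (\<integral>z. cyl_dt \<phi> z * cyl_dt \<psi> z + cyl_grad_theta \<phi> z \<bullet> cyl_grad_theta \<psi> z
                           + m^2 * \<phi> z * \<psi> z \<partial>cyl_measure)"

definition approx_seq :: "real \<Rightarrow> (real \<times> (real^'n) \<Rightarrow> real) \<Rightarrow> (nat \<Rightarrow> real \<times> (real^'n) \<Rightarrow> real) \<Rightarrow> bool" where
  "approx_seq m v \<phi> \<longleftrightarrow>
     (\<forall>k. cyl_test (\<phi> k)) \<and>
     ((\<lambda>k. \<integral>\<^sup>+ z. ennreal ((\<phi> k z - v z)^2) \<partial>cyl_measure) \<longlonglongrightarrow> 0) \<and>
     (\<forall>e>0. \<exists>K. \<forall>k\<ge>K. \<forall>l\<ge>K.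
         cyl_inner m (\<lambda>z. \<phi> k z - \<phi> l z) (\<lambda>z. \<phi> k z - \<phi> l z) < e)"

text \<open>H^1(C): completion of C^1_c(C) in the H^1 norm.\<close>
definition H1 :: "real \<Rightarrow> (real \<times> (real^'n) \<Rightarrow> real) set" where
  "H1 m = {v. v \<in> borel_measurable cyl_measure \<and> (\<exists>\<phi>. approx_seq m v \<phi>)}"

definition H1_inner :: "real \<Rightarrow> (real \<times> (real^'n) \<Rightarrow> real) \<Rightarrow> (real \<times> (real^'n) \<Rightarrow> real) \<Rightarrow> real" where
  "H1_inner m v w = lim (\<lambda>k. cyl_inner m ((SOME \<phi>. approx_seq m v \<phi>) k) ((SOME \<psi>. approx_seq m w \<psi>) k))"

definition H1_norm :: "real \<Rightarrow> (real \<times> (real^'n) \<Rightarrow> real) \<Rightarrow> real" where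
  "H1_norm m v = sqrt (H1_inner m v v)"

definition Lp_norm :: "real \<Rightarrow> (real \<times> (real^'n) \<Rightarrow> real) \<Rightarrow> real" where
  "Lp_norm q v = (\<integral>z. \<bar>v z\<bar> powr q \<partial>cyl_measure) powr (1 / q)"

text \<open>C_{a,b,N}^{-1}, with m = a_c - a and p the exponent.\<close>
definition Cinv :: "real \<Rightarrow> real \<Rightarrow> 'n::finite itself \<Rightarrow> real" where
  "Cinv m p _ = Inf {(H1_norm m v)^2 / (Lp_norm (p + 1) v)^2 | v :: real \<times> (real^'n) \<Rightarrow> real.
                       v \<in> H1 m \<and> \<not> (AE z in cyl_measure. v z = 0)}"

definition Lambda :: "real \<Rightarrow> real \<Rightarrow> 'n::finite itself \<Rightarrow> real" where
  "Lambda m p n = (Cinv m p n) powr ((p + 1) / (p - 1))"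

text \<open>H^{-1} norm of f = (phi |-> <v,phi>_{H^1} - int v^p phi).\<close>
definition f_dual_norm :: "real \<Rightarrow> real \<Rightarrow> (real \<times> (real^'n) \<Rightarrow> real) \<Rightarrow> ereal" where
  "f_dual_norm m p v = (SUP \<phi>\<in>{\<phi>. \<phi> \<in> H1 m \<and> H1_norm m \<phi> \<le> 1}.
        ereal \<bar>H1_inner m v \<phi> - (\<integral>z. v z powr p * \<phi> z \<partial>cyl_measure)\<bar>)"

definition Psi :: "real \<Rightarrow> real \<Rightarrow> real \<Rightarrow> real" where
  "Psi p m t = ((p + 1) * m^2 / 2) powr (1 / (p - 1)) * (cosh (m * (p - 1) / 2 * t)) powr (-2 / (p - 1))"

definition sumPsi :: "real \<Rightarrow> real \<Rightarrow> nat \<Rightarrow> (nat \<Rightarrow> real) \<Rightarrow> real \<times> (real^'n) \<Rightarrow> real" where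
  "sumPsi p m \<nu> s z = (\<Sum>j=1..\<nu>. Psi p m (fst z - s j))"

definition Eint :: "real \<Rightarrow> real \<Rightarrow> nat \<Rightarrow> (nat \<Rightarrow> real) \<Rightarrow> real \<Rightarrow> real" where
  "Eint p m \<nu> s t = (\<Sum>j=1..\<nu>. Psi p m (t - s j)) powr p - (\<Sum>j=1..\<nu>. (Psi p m (t - s j)) powr p)"

definition Qint :: "real \<Rightarrow> nat \<Rightarrow> (nat \<Rightarrow> real) \<Rightarrow> real" where
  "Qint m \<nu> s = exp (- m * Min {\<bar>s i - s j\<bar> | i j. i \<in> {1..\<nu>} \<and> j \<in> {1..\<nu>} \<and> i \<noteq> j})"

text \<open>((s_i + s_{i-1})/2, (s_{i+1} + s_i)/2) with s_0 = -infinity, s_{nu+1} = +infinity.\<close>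
definition cell :: "nat \<Rightarrow> (nat \<Rightarrow> real) \<Rightarrow> nat \<Rightarrow> real set" where
  "cell \<nu> s i = {t. (i = 1 \<or> (s i + s (i - 1)) / 2 < t) \<and> (i = \<nu> \<or> t < (s (i + 1) + s i) / 2)}"

text \<open>Weighted norm sum_i sup_{t in cell i} |E| / (Q e^{-w |t - s_i|});
  w = (a_c - a)(p - 2) gives the natural norm, w = (1 - varsigma)(a_c - a) the sharp one.\<close>
definition Enorm :: "real \<Rightarrow> real \<Rightarrow> nat \<Rightarrow> (nat \<Rightarrow> real) \<Rightarrow> real \<Rightarrow> ereal" where
  "Enorm p m \<nu> s w = (\<Sum>i=1..\<nu>. SUP t\<in>cell \<nu> s i.
        ereal (\<bar>Eint p m \<nu> s t\<bar> / (Qint m \<nu> s * exp (- w * \<bar>t - s i\<bar>))))"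

definition admissible :: "nat \<Rightarrow> real \<Rightarrow> real \<Rightarrow> nat \<Rightarrow> (real \<times> (real^'n) \<Rightarrow> real) \<Rightarrow> (nat \<Rightarrow> real) \<Rightarrow> bool" where
  "admissible N a b \<nu> v s \<longleftrightarrow>
     (let m = ac N - a; p = pexp N a b; \<Lambda> = Lambda m p TYPE('n) in
       v \<in> H1 m \<and> (\<forall>z. 0 \<le> v z) \<and>
       (real \<nu> - 1/2) * \<Lambda> < (H1_norm m v)^2 \<and> (H1_norm m v)^2 < (real \<nu> + 1/2) * \<Lambda> \<and>
       (\<forall>i\<in>{1..<\<nu>}. s i < s (i + 1)) \<and>
       (\<forall>s'. H1_norm m (\<lambda>z. v z - sumPsi p m \<nu> s z) \<le> H1_norm m (\<lambda>z. v z - sumPsi p m \<nu> s' z)))"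

end

theory Submission imports Defs begin

definition KK :: "real \<Rightarrow> real \<Rightarrow> real" where
  "KK p m = ((p + 1) * m^2 / 2) powr (1 / (p - 1))"
definition BB :: "real \<Rightarrow> real \<Rightarrow> real" where
  "BB p m = KK p m * 2 powr (2 / (p - 1))"

lemma KK_pos: "m > 0 \<Longrightarrow> p > 1 \<Longrightarrow> KK p m > 0"
  unfolding KK_def by simp

lemma Psi_pos: assumes "m > 0" "p > 1" shows "Psi p m t > 0"
proof -
  have "cosh (m * (p - 1) / 2 * t) > 0" by simp
  then show ?thesis using KK_pos[OF assms] unfolding Psi_def KK_def by simp
qed

lemma cosh_lower: "exp \<bar>x::real\<bar> / 2 \<le> cosh x"
  unfolding cosh_def by (cases "x \<ge> 0") auto

lemma Psi_upper: assumes "m > 0" "p > 1" shows "Psi p m t \<le> BB p m * exp (- m * \<bar>t\<bar>)"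
proof -
  define al where "al = m * (p - 1) / 2"
  have al: "al \<ge> 0" using assms by (simp add: al_def)
  have "cosh (al * t) powr (-2/(p-1)) \<le> (exp \<bar>al * t\<bar> / 2) powr (-2/(p-1))"
    by (rule powr_mono2') (use assms cosh_lower[of "al*t"] in auto)
  also have "\<dots> = exp (\<bar>al * t\<bar> * (-2/(p-1))) * 2 powr (2/(p-1))"
    by (simp add: powr_divide exp_powr_real powr_minus_divide) (simp add: exp_minus field_simps)
  also have "\<bar>al * t\<bar> * (-2/(p-1)) = - m * \<bar>t\<bar>"
    using assms al by (simp add: al_def abs_mult)
  finally have "cosh (al * t) powr (-2/(p-1)) \<le> exp (- m * \<bar>t\<bar>) * 2 powr (2/(p-1))" .
  then have "KK p m * cosh (al * t) powr (-2/(p-1)) \<le> KK p m * (exp (- m * \<bar>t\<bar>) * 2 powr (2/(p-1)))"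
    using KK_pos[OF assms] by (intro mult_left_mono) auto
  then show ?thesis unfolding Psi_def BB_def KK_def al_def by (simp add: ac_simps)
qed

lemma powr_diff_le:
  fixes x u p :: real
  assumes "0 < x" "x \<le> u" "p \<ge> 1"
  shows "u powr p - x powr p \<le> p * u powr (p - 1) * (u - x)"
proof (cases "x = u")
  case True then show ?thesis by simp
next
  case False
  then have xu: "x < u" using assms by simp
  have "\<forall>z. x \<le> z \<and> z \<le> u \<longrightarrow> ((\<lambda>z. z powr p) has_real_derivative p * z powr (p - 1)) (at z)"
    using assms by (auto intro!: has_real_derivative_powr)
  from MVT2[OF xu, of "\<lambda>z. z powr p" "\<lambda>z. p * z powr (p - 1)"] this obtain z where z: "x < z" "z < u"
    "u powr p - x powr p = (u - x) * (p * z powr (p - 1))" by blast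
  have "z powr (p - 1) \<le> u powr (p - 1)"
    using z assms by (intro powr_mono2) auto
  then have "(u - x) * (p * z powr (p - 1)) \<le> (u - x) * (p * u powr (p - 1))"
    using xu assms by (intro mult_left_mono) auto
  then show ?thesis using z by (simp add: ac_simps)
qed

lemma s_mono:
  fixes s :: "nat \<Rightarrow> real"
  assumes mono: "\<forall>i\<in>{1..<\<nu>}. s i < s (i + 1)" and "1 \<le> i" "i < j" "j \<le> \<nu>"
  shows "s i < (s j :: real)"
proof -
  have "\<forall>k. i + k + 1 \<le> \<nu> \<longrightarrow> s i < s (i + k + 1)"
  proof
    fix k show "i + k + 1 \<le> \<nu> \<longrightarrow> s i < s (i + k + 1)"
    proof (induction k)
      case 0 then show ?case using mono assms(2) by auto
    next
      case (Suc k)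
      show ?case
      proof
        assume h: "i + Suc k + 1 \<le> \<nu>"
        then have "s i < s (i + k + 1)" using Suc by simp
        moreover have "s (i + k + 1) < s (i + k + 1 + 1)" using mono h assms(2) by auto
        ultimately show "s i < s (i + Suc k + 1)" by simp
      qed
    qed
  qed
  from this[rule_format, of "j - i - 1"] assms show ?thesis by simp
qed

lemma s_le:
  fixes s :: "nat \<Rightarrow> real"
  assumes mono: "\<forall>i\<in>{1..<\<nu>}. s i < s (i + 1)" and "1 \<le> i" "i \<le> j" "j \<le> \<nu>"
  shows "s i \<le> (s j :: real)"
  using s_mono[OF mono, of i j] assms by (cases "i = j") auto

lemma cell_dist:
  assumes mono: "\<forall>i\<in>{1..<\<nu>}. s i < s (i + 1)" and i: "i \<in> {1..\<nu>}" and j: "j \<in> {1..\<nu>}"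
    and t: "t \<in> cell \<nu> s i"
  shows "\<bar>t - s i\<bar> \<le> \<bar>t - s j\<bar>"
proof -
  consider "j = i" | "i < j" | "j < i" by linarith
  then show ?thesis
  proof cases
    case 1 then show ?thesis by simp
  next
    case 2
    then have "i \<noteq> \<nu>" using j by auto
    then have t1: "t < (s (i + 1) + s i) / 2" using t by (auto simp: cell_def)
    have "s (i + 1) \<le> s j" using s_le[OF mono, of "i+1" j] 2 j by auto
    moreover have "s i < s (i + 1)" using mono i \<open>i \<noteq> \<nu>\<close> by auto
    ultimately show ?thesis using t1 by (simp add: abs_if)
  next
    case 3
    then have "i \<noteq> 1" using j by auto
    then have t1: "(s i + s (i - 1)) / 2 < t" using t by (auto simp: cell_def)
    have "s j \<le> s (i - 1)" using s_le[OF mono, of j "i - 1"] 3 j i by auto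
    moreover have "s (i - 1) < s i"
    proof -
      have "i - 1 \<in> {1..<\<nu>}" using i \<open>i \<noteq> 1\<close> by auto
      then have "s (i - 1) < s (i - 1 + 1)" using mono by blast
      then show ?thesis using \<open>i \<noteq> 1\<close> i by simp
    qed
    ultimately show ?thesis using t1 by (simp add: abs_if)
  qed
qed

lemma Q_ge:
  assumes "i \<in> {1..\<nu>}" "j \<in> {1..\<nu>}" "i \<noteq> j" "m > 0"
  shows "exp (- m * \<bar>s i - s j\<bar>) \<le> Qint m \<nu> s"
proof -
  let ?S = "{\<bar>s i - s j\<bar> | i j. i \<in> {1..\<nu>} \<and> j \<in> {1..\<nu>} \<and> i \<noteq> j}"
  have "?S \<subseteq> (\<lambda>(i, j). \<bar>s i - s j\<bar>) ` ({1..\<nu>} \<times> {1..\<nu>})" by auto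
  then have fin: "finite ?S" by (rule finite_subset) auto
  have "\<bar>s i - s j\<bar> \<in> ?S" using assms by blast
  then have "Min ?S \<le> \<bar>s i - s j\<bar>" using fin by (rule Min_le[rotated])
  then show ?thesis unfolding Qint_def using assms(4) by simp
qed

definition C0 :: "real \<Rightarrow> real \<Rightarrow> nat \<Rightarrow> real" where
  "C0 p m \<nu> = (p + 1) * (real \<nu> * BB p m) powr (p - 1) * ((real \<nu> - 1) * BB p m)"

lemma BB_pos: "m > 0 \<Longrightarrow> p > 1 \<Longrightarrow> BB p m > 0"
  unfolding BB_def using KK_pos by simp

lemma C0_nonneg: "m > 0 \<Longrightarrow> p > 1 \<Longrightarrow> \<nu> \<ge> 1 \<Longrightarrow> C0 p m \<nu> \<ge> 0"
  unfolding C0_def using BB_pos[of m p] by simp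

lemma cell_bound:
  fixes s :: "nat \<Rightarrow> real"
  assumes m: "m > 0" and p: "p > 1" and nu: "\<nu> \<ge> 2"
    and mono: "\<forall>i\<in>{1..<\<nu>}. s i < s (i + 1)" and i: "i \<in> {1..\<nu>}"
    and t: "t \<in> cell \<nu> s i" and w: "w \<le> m * (p - 2)"
  shows "\<bar>Eint p m \<nu> s t\<bar> / (Qint m \<nu> s * exp (- w * \<bar>t - s i\<bar>)) \<le> C0 p m \<nu>"
proof -
  define P where "P j = Psi p m (t - s j)" for j
  define r where "r = \<bar>t - s i\<bar>"
  define B where "B = BB p m"
  define Q where "Q = Qint m \<nu> s"
  define J where "J = {1..\<nu>} - {i}"
  define x where "x = P i"
  define y where "y = sum P J"
  define u where "u = sum P {1..\<nu>}"
  have Ppos: "P j > 0" for j using Psi_pos[OF m p] P_def by simp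
  have B: "B > 0" using BB_pos[OF m p] B_def by simp
  have r: "r \<ge> 0" using r_def by simp
  have Q: "Q > 0" unfolding Q_def Qint_def by simp
  have finJ: "finite J" and cardJ: "card J = \<nu> - 1" using i J_def by auto
  have u: "u = x + y" using i by (simp add: u_def x_def y_def J_def sum.remove)
  have xpos: "x > 0" using Ppos x_def by simp
  have ypos: "y \<ge> 0" unfolding y_def using Ppos by (simp add: sum_nonneg less_imp_le)
  have Pj_le: "P j \<le> B * exp (- m * r)" if j: "j \<in> {1..\<nu>}" for j
  proof -
    have "P j \<le> B * exp (- m * \<bar>t - s j\<bar>)" using Psi_upper[OF m p] P_def B_def by simp
    also have "\<dots> \<le> B * exp (- m * r)"
      using cell_dist[OF mono i j t] m B by (simp add: r_def)
    finally show ?thesis .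
  qed
  have u_le: "u \<le> real \<nu> * (B * exp (- m * r))"
    unfolding u_def using sum_bounded_above[of "{1..\<nu>}" P "B * exp (- m * r)"] Pj_le by simp
  have Pj_le2: "P j \<le> B * (Q * exp (m * r))" if j: "j \<in> J" for j
  proof -
    have j': "j \<in> {1..\<nu>}" "i \<noteq> j" using j J_def by auto
    have tri: "\<bar>s i - s j\<bar> - r \<le> \<bar>t - s j\<bar>" unfolding r_def by linarith
    have "P j \<le> B * exp (- m * \<bar>t - s j\<bar>)" using Psi_upper[OF m p] P_def B_def by simp
    also have "\<dots> \<le> B * exp (- m * \<bar>s i - s j\<bar> + m * r)"
    proof -
      have "m * \<bar>s i - s j\<bar> \<le> m * (r + \<bar>t - s j\<bar>)" using tri m by (intro mult_left_mono) auto
      then show ?thesis using B by (simp add: algebra_simps)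
    qed
    also have "\<dots> = B * (exp (- m * \<bar>s i - s j\<bar>) * exp (m * r))" by (simp add: exp_add[symmetric])
    also have "\<dots> \<le> B * (Q * exp (m * r))"
      using Q_ge[OF i j'(1) j'(2) m, of s] B by (simp add: Q_def)
    finally show ?thesis .
  qed
  have y_le: "y \<le> (real \<nu> - 1) * (B * (Q * exp (m * r)))"
  proof -
    have "y \<le> real (card J) * (B * (Q * exp (m * r)))"
      unfolding y_def using sum_bounded_above[of J P] Pj_le2 by simp
    also have "real (card J) = real \<nu> - 1" using cardJ nu by simp
    finally show ?thesis .
  qed
  have E_eq: "Eint p m \<nu> s t = (u powr p - x powr p) - sum (\<lambda>j. P j powr p) J"
  proof -
    have "sum (\<lambda>j. P j powr p) {1..\<nu>} = x powr p + sum (\<lambda>j. P j powr p) J"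
      using i by (simp add: x_def J_def sum.remove)
    then show ?thesis unfolding Eint_def u_def P_def by simp
  qed
  have xu: "x \<le> u" using u ypos by simp
  have d1: "0 \<le> u powr p - x powr p" using xu xpos p by (simp add: powr_mono2)
  have d1': "u powr p - x powr p \<le> p * u powr (p - 1) * y"
    using powr_diff_le[OF xpos xu, of p] p u by simp
  have d2: "sum (\<lambda>j. P j powr p) J \<le> u powr (p - 1) * y"
  proof -
    have "P j powr p \<le> u powr (p - 1) * P j" if j: "j \<in> J" for j
    proof -
      have "P j \<le> y" unfolding y_def using finJ j Ppos by (intro member_le_sum) (auto simp: less_imp_le)
      then have Pu: "P j \<le> u" using u xpos by simp
      have "P j powr p = P j powr (p - 1) * P j"
      proof -
        have "P j powr p = P j powr ((p - 1) + 1)" by simp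
        also have "\<dots> = P j powr (p - 1) * P j powr 1" by (rule powr_add)
        finally show ?thesis using Ppos[of j] by simp
      qed
      also have "\<dots> \<le> u powr (p - 1) * P j"
        using Pu Ppos[of j] p by (intro mult_right_mono powr_mono2) (auto simp: less_imp_le)
      finally show ?thesis .
    qed
    then have "sum (\<lambda>j. P j powr p) J \<le> sum (\<lambda>j. u powr (p - 1) * P j) J" by (rule sum_mono)
    also have "\<dots> = u powr (p - 1) * y" by (simp add: y_def sum_distrib_left)
    finally show ?thesis .
  qed
  have d2': "0 \<le> sum (\<lambda>j. P j powr p) J" by (simp add: sum_nonneg)
  have absE: "\<bar>Eint p m \<nu> s t\<bar> \<le> (p + 1) * u powr (p - 1) * y"
    using E_eq d1 d1' d2 d2' by (simp add: algebra_simps abs_le_iff)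
  have upos: "u > 0" using u xpos ypos by simp
  have up: "u powr (p - 1) \<le> (real \<nu> * B) powr (p - 1) * exp (- m * (p - 1) * r)"
  proof -
    have "u powr (p - 1) \<le> (real \<nu> * B * exp (- m * r)) powr (p - 1)"
      using u_le upos p by (intro powr_mono2) (auto simp: ac_simps)
    also have "\<dots> = (real \<nu> * B) powr (p - 1) * exp (- m * (p - 1) * r)"
      using B by (simp add: powr_mult exp_powr_real ac_simps)
    finally show ?thesis .
  qed
  have "\<bar>Eint p m \<nu> s t\<bar> \<le> (p + 1) * ((real \<nu> * B) powr (p - 1) * exp (- m * (p - 1) * r))
          * ((real \<nu> - 1) * (B * (Q * exp (m * r))))"
  proof -
    have "(p + 1) * u powr (p - 1) * y \<le> (p + 1) * ((real \<nu> * B) powr (p - 1) * exp (- m * (p - 1) * r))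
          * ((real \<nu> - 1) * (B * (Q * exp (m * r))))"
      using up y_le p ypos by (intro mult_mono) auto
    then show ?thesis using absE by linarith
  qed
  also have "\<dots> = C0 p m \<nu> * Q * (exp (- m * (p - 1) * r) * exp (m * r))"
    by (simp add: C0_def B_def ac_simps)
  also have "exp (- m * (p - 1) * r) * exp (m * r) = exp (- (m * (p - 2)) * r)"
    by (simp add: exp_add[symmetric] algebra_simps)
  also have "C0 p m \<nu> * Q * exp (- (m * (p - 2)) * r) \<le> C0 p m \<nu> * Q * exp (- w * r)"
    using C0_nonneg[OF m p, of \<nu>] nu Q w r by (intro mult_left_mono) (auto intro: mult_right_mono)
  finally have "\<bar>Eint p m \<nu> s t\<bar> \<le> C0 p m \<nu> * (Q * exp (- w * r))" by (simp add: ac_simps)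
  then show ?thesis using Q by (simp add: pos_divide_le_eq Q_def r_def)
qed

lemma Enorm_bound:
  fixes s :: "nat \<Rightarrow> real"
  assumes m: "m > 0" and p: "p > 1" and nu: "\<nu> \<ge> 2"
    and mono: "\<forall>i\<in>{1..<\<nu>}. s i < s (i + 1)" and w: "w \<le> m * (p - 2)"
  shows "Enorm p m \<nu> s w \<le> ereal (real \<nu> * C0 p m \<nu>)"
proof -
  have "Enorm p m \<nu> s w \<le> (\<Sum>i=1..\<nu>. ereal (C0 p m \<nu>))"
    unfolding Enorm_def
  proof (rule sum_mono)
    fix i assume i: "i \<in> {1..\<nu>}"
    show "(SUP t\<in>cell \<nu> s i. ereal (\<bar>Eint p m \<nu> s t\<bar> / (Qint m \<nu> s * exp (- w * \<bar>t - s i\<bar>))))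
          \<le> ereal (C0 p m \<nu>)"
      using cell_bound[OF m p nu mono i _ w] by (intro SUP_least) simp
  qed
  also have "\<dots> = ereal (real \<nu> * C0 p m \<nu>)" by simp
  finally show ?thesis .
qed

theorem lemma5p4:
  fixes N \<nu> :: nat and a b :: real
  assumes "CARD('n) = N" and "N \<ge> 3"
    and "a < ac N"
    and "(bFS N a \<le> b \<and> b < a + 1 \<and> a < 0) \<or> (a \<le> b \<and> b < a + 1 \<and> 0 \<le> a \<and> 0 < a + b)"
    and "\<nu> \<ge> 2"
  shows "(1 < pexp N a b \<and> pexp N a b < 3 \<longrightarrow>
            (\<exists>\<delta>>0. \<exists>C>0. \<forall>(v :: real \<times> (real^'n) \<Rightarrow> real) s.
               admissible N a b \<nu> v s \<longrightarrow>
               f_dual_norm (ac N - a) (pexp N a b) v \<le> ereal \<delta> \<longrightarrow>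
               Enorm (pexp N a b) (ac N - a) \<nu> s ((ac N - a) * (pexp N a b - 2)) \<le> ereal C))
       \<and> (3 \<le> pexp N a b \<longrightarrow>
            (\<exists>vs0>0. \<forall>vs. 0 < vs \<and> vs < vs0 \<longrightarrow>
              (\<exists>\<delta>>0. \<exists>C>0. \<forall>(v :: real \<times> (real^'n) \<Rightarrow> real) s.
                 admissible N a b \<nu> v s \<longrightarrow>
                 f_dual_norm (ac N - a) (pexp N a b) v \<le> ereal \<delta> \<longrightarrow>
                 Enorm (pexp N a b) (ac N - a) \<nu> s ((1 - vs) * (ac N - a)) \<le> ereal C)))"
proof -
  define m where "m = ac N - a"
  define p where "p = pexp N a b"
  have m: "m > 0" using assms(3) m_def by simp
  have nu: "\<nu> \<ge> 2" by (rule assms(5))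
  have mono: "\<forall>i\<in>{1..<\<nu>}. s i < s (i + 1)" if "admissible N a b \<nu> (v :: real \<times> (real^'n) \<Rightarrow> real) s" for v s
    using that unfolding admissible_def Let_def by blast
  define C where "C = real \<nu> * C0 p m \<nu> + 1"
  have part1: "1 < p \<and> p < 3 \<longrightarrow>
            (\<exists>\<delta>>0. \<exists>C>0. \<forall>(v :: real \<times> (real^'n) \<Rightarrow> real) s.
               admissible N a b \<nu> v s \<longrightarrow>
               f_dual_norm m p v \<le> ereal \<delta> \<longrightarrow>
               Enorm p m \<nu> s (m * (p - 2)) \<le> ereal C)"
  proof
    assume p: "1 < p \<and> p < 3"
    have Cpos: "C > 0" using C0_nonneg[OF m, of p \<nu>] p nu unfolding C_def
      by (intro add_nonneg_pos mult_nonneg_nonneg) auto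
    show "\<exists>\<delta>>0. \<exists>C>0. \<forall>(v :: real \<times> (real^'n) \<Rightarrow> real) s.
               admissible N a b \<nu> v s \<longrightarrow>
               f_dual_norm m p v \<le> ereal \<delta> \<longrightarrow>
               Enorm p m \<nu> s (m * (p - 2)) \<le> ereal C"
    proof (rule exI[of _ "1::real"], intro conjI exI[of _ C] allI impI)
      fix v :: "real \<times> (real^'n) \<Rightarrow> real" and s
      assume "admissible N a b \<nu> v s" "f_dual_norm m p v \<le> ereal 1"
      then have mo: "\<forall>i\<in>{1..<\<nu>}. s i < s (i + 1)" by (intro mono)
      have "Enorm p m \<nu> s (m * (p - 2)) \<le> ereal (real \<nu> * C0 p m \<nu>)"
        using Enorm_bound[OF m _ nu mo] p by simp
      also have "\<dots> \<le> ereal C" by (simp add: C_def)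
      finally show "Enorm p m \<nu> s (m * (p - 2)) \<le> ereal C" .
    qed (use Cpos in auto)
  qed
  have part2: "3 \<le> p \<longrightarrow>
            (\<exists>vs0>0. \<forall>vs. 0 < vs \<and> vs < vs0 \<longrightarrow>
              (\<exists>\<delta>>0. \<exists>C>0. \<forall>(v :: real \<times> (real^'n) \<Rightarrow> real) s.
                 admissible N a b \<nu> v s \<longrightarrow>
                 f_dual_norm m p v \<le> ereal \<delta> \<longrightarrow>
                 Enorm p m \<nu> s ((1 - vs) * m) \<le> ereal C))"
  proof
    assume p: "3 \<le> p"
    have Cpos: "C > 0" using C0_nonneg[OF m, of p \<nu>] p nu unfolding C_def
      by (intro add_nonneg_pos mult_nonneg_nonneg) auto
    show "\<exists>vs0>0. \<forall>vs. 0 < vs \<and> vs < vs0 \<longrightarrow>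
              (\<exists>\<delta>>0. \<exists>C>0. \<forall>(v :: real \<times> (real^'n) \<Rightarrow> real) s.
                 admissible N a b \<nu> v s \<longrightarrow>
                 f_dual_norm m p v \<le> ereal \<delta> \<longrightarrow>
                 Enorm p m \<nu> s ((1 - vs) * m) \<le> ereal C)"
    proof (rule exI[of _ "1::real"], intro conjI allI impI)
      fix vs :: real assume vs: "0 < vs \<and> vs < 1"
      have w: "(1 - vs) * m \<le> m * (p - 2)"
      proof -
        have "(1 - vs) * m \<le> 1 * m" using vs m by (intro mult_right_mono) auto
        also have "\<dots> \<le> (p - 2) * m" using p m by (intro mult_right_mono) auto
        finally show ?thesis by (simp add: ac_simps)
      qed
      show "\<exists>\<delta>>0. \<exists>C>0. \<forall>(v :: real \<times> (real^'n) \<Rightarrow> real) s.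
                 admissible N a b \<nu> v s \<longrightarrow>
                 f_dual_norm m p v \<le> ereal \<delta> \<longrightarrow>
                 Enorm p m \<nu> s ((1 - vs) * m) \<le> ereal C"
      proof (rule exI[of _ "1::real"], intro conjI exI[of _ C] allI impI)
        fix v :: "real \<times> (real^'n) \<Rightarrow> real" and s
        assume "admissible N a b \<nu> v s" "f_dual_norm m p v \<le> ereal 1"
        then have mo: "\<forall>i\<in>{1..<\<nu>}. s i < s (i + 1)" by (intro mono)
        have "Enorm p m \<nu> s ((1 - vs) * m) \<le> ereal (real \<nu> * C0 p m \<nu>)"
          using Enorm_bound[OF m _ nu mo w] p by simp
        also have "\<dots> \<le> ereal C" by (simp add: C_def)
        finally show "Enorm p m \<nu> s ((1 - vs) * m) \<le> ereal C" .
      qed (use Cpos in auto)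
    qed simp
  qed
  from part1 part2 show ?thesis unfolding m_def p_def by (intro conjI)
qed

end
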